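(* Let $K$ be a compact group and $K_1,\dots,K_n$ subgroups of $K$ such that $K=(K_1K_2\cdots K_n)^N$ for some $N\in\mathbb{N}^*$. Then for any finite-dimensional unitary representation $(V,\tau)$ of $K$ without non-zero invariant vector, any $x\in V$, and any $y_1,\dots,y_n\in V$ with $y_i$ invariant under $K_i$ for each $i$, we have $$\|x\|_V\leq 2nN\max_{1\leq i\leq n}\|x-y_i\|_V.$$
   Context: $(K_1K_2\cdots K_n)^N$ denotes the set of products $(k_{11}\cdots k_{n1})\cdots(k_{1N}\cdots k_{nN})$ with $k_{ij}\in K_i$. Representations are continuous. *)

theory Defs
  imports "HOL-Analysis.Analysis" "HOL-Algebra.Group"
begin

definition compact_group :: "('g, 'b) monoid_scheme \<Rightarrow> 'g topology \<Rightarrow> bool" where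
  "compact_group G T \<longleftrightarrow> group G \<and> topspace T = carrier G \<and> compact_space T \<and> Hausdorff_space T
     \<and> continuous_map (prod_topology T T) T (\<lambda>(a, b). a \<otimes>\<^bsub>G\<^esub> b)
     \<and> continuous_map T T (\<lambda>a. inv\<^bsub>G\<^esub> a)"

definition unitary_op :: "(complex ^ 'n \<Rightarrow> complex ^ 'n) \<Rightarrow> bool" where
  "unitary_op f \<longleftrightarrow> (\<forall>u v. f (u + v) = f u + f v) \<and> (\<forall>(c::complex) u. f (c *s u) = c *s f u)
     \<and> (\<forall>u. norm (f u) = norm u) \<and> bij f"

definition unitary_rep :: "('g, 'b) monoid_scheme \<Rightarrow> 'g topology \<Rightarrow> ('g \<Rightarrow> complex ^ 'n \<Rightarrow> complex ^ 'n) \<Rightarrow> bool" where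
  "unitary_rep G T \<tau> \<longleftrightarrow> (\<forall>g \<in> carrier G. unitary_op (\<tau> g))
     \<and> (\<forall>g \<in> carrier G. \<forall>h \<in> carrier G. \<tau> (g \<otimes>\<^bsub>G\<^esub> h) = \<tau> g \<circ> \<tau> h)
     \<and> \<tau> \<one>\<^bsub>G\<^esub> = id
     \<and> (\<forall>v. continuous_map T euclidean (\<lambda>g. \<tau> g v))"

text \<open>(K_1 K_2 ... K_n)^N: products k_{11}...k_{n1} ... k_{1N}...k_{nN}, written as the
  product of a list of length n*N whose j-th entry (0-based) lies in K_{(j mod n)+1}.\<close>
definition prod_power_set :: "('g, 'b) monoid_scheme \<Rightarrow> (nat \<Rightarrow> 'g set) \<Rightarrow> nat \<Rightarrow> nat \<Rightarrow> 'g set" where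
  "prod_power_set G Ks n N = {foldr (\<lambda>a b. a \<otimes>\<^bsub>G\<^esub> b) ks \<one>\<^bsub>G\<^esub> | ks.
       length ks = n * N \<and> (\<forall>j < n * N. ks ! j \<in> Ks (j mod n + 1))}"

end

theory Submission
  imports Defs
begin

lemma unitary_diff:
  assumes "unitary_op f" shows "f (u - v) = f u - f v"
proof -
  have "f ((u - v) + v) = f (u - v) + f v" using assms unfolding unitary_op_def by blast
  then show ?thesis by (simp add: algebra_simps)
qed

lemma unitary_linear:
  assumes "unitary_op (f :: complex ^ 'n \<Rightarrow> complex ^ 'n)" shows "linear f"
proof (rule linearI)
  fix u v show "f (u + v) = f u + f v" using assms unfolding unitary_op_def by blast
next
  fix r :: real and u :: "complex ^ 'n"
  have e: "\<And>w :: complex ^ 'n. r *\<^sub>R w = complex_of_real r *s w"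
    by (simp add: vec_eq_iff) (simp add: scaleR_conv_of_real)
  show "f (r *\<^sub>R u) = r *\<^sub>R f u" unfolding e using assms unfolding unitary_op_def by blast
qed

lemma unitary_norm:
  assumes "unitary_op f" shows "norm (f u) = norm u"
  using assms unfolding unitary_op_def by blast

lemma foldr_bound:
  assumes grp: "group G" and rep: "unitary_rep G T \<tau>"
  shows "set ks \<subseteq> carrier G \<Longrightarrow> (\<forall>k\<in>set ks. norm (\<tau> k x - x) \<le> d) \<Longrightarrow>
    foldr (\<lambda>a b. a \<otimes>\<^bsub>G\<^esub> b) ks \<one>\<^bsub>G\<^esub> \<in> carrier G \<and>
    norm (\<tau> (foldr (\<lambda>a b. a \<otimes>\<^bsub>G\<^esub> b) ks \<one>\<^bsub>G\<^esub>) x - x) \<le> real (length ks) * d"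
proof (induction ks)
  case Nil
  then show ?case using rep grp unfolding unitary_rep_def by (simp add: group.is_monoid monoid.one_closed)
next
  case (Cons k ks)
  define r where "r = foldr (\<lambda>a b. a \<otimes>\<^bsub>G\<^esub> b) ks \<one>\<^bsub>G\<^esub>"
  have r: "r \<in> carrier G" "norm (\<tau> r x - x) \<le> real (length ks) * d"
    using Cons unfolding r_def by auto
  have k: "k \<in> carrier G" "norm (\<tau> k x - x) \<le> d" using Cons.prems by auto
  have u: "unitary_op (\<tau> k)" using rep k unfolding unitary_rep_def by blast
  have m: "\<tau> (k \<otimes>\<^bsub>G\<^esub> r) = \<tau> k \<circ> \<tau> r" using rep k r unfolding unitary_rep_def by blast
  have "\<tau> (k \<otimes>\<^bsub>G\<^esub> r) x - x = \<tau> k (\<tau> r x - x) + (\<tau> k x - x)"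
    using m unitary_diff[OF u] by simp
  then have "norm (\<tau> (k \<otimes>\<^bsub>G\<^esub> r) x - x) \<le> norm (\<tau> k (\<tau> r x - x)) + norm (\<tau> k x - x)"
    by (metis norm_triangle_ineq)
  also have "\<dots> \<le> real (length ks) * d + d" using unitary_norm[OF u] r k by simp
  finally have b: "norm (\<tau> (k \<otimes>\<^bsub>G\<^esub> r) x - x) \<le> real (length (k # ks)) * d"
    by (simp add: distrib_right)
  have f: "foldr (\<lambda>a b. a \<otimes>\<^bsub>G\<^esub> b) (k # ks) \<one>\<^bsub>G\<^esub> = k \<otimes>\<^bsub>G\<^esub> r"
    unfolding r_def by simp
  have "k \<otimes>\<^bsub>G\<^esub> r \<in> carrier G" using grp k r by (simp add: group.is_monoid monoid.m_closed)
  then show ?case unfolding f using b by blast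
qed

theorem lemma3p10:
  fixes G :: "('g, 'b) monoid_scheme" and T :: "'g topology"
    and Ks :: "nat \<Rightarrow> 'g set" and n N :: nat
    and \<tau> :: "'g \<Rightarrow> complex ^ 'm \<Rightarrow> complex ^ 'm"
    and x :: "complex ^ 'm" and y :: "nat \<Rightarrow> complex ^ 'm"
  assumes "compact_group G T"
    and "n \<ge> 1"
    and "\<And>i. i \<in> {1..n} \<Longrightarrow> subgroup (Ks i) G"
    and "N \<ge> 1"
    and "carrier G = prod_power_set G Ks n N"
    and "unitary_rep G T \<tau>"
    and "\<And>v. (\<forall>g \<in> carrier G. \<tau> g v = v) \<Longrightarrow> v = 0"
    and "\<And>i g. i \<in> {1..n} \<Longrightarrow> g \<in> Ks i \<Longrightarrow> \<tau> g (y i) = y i"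
  shows "norm x \<le> 2 * real n * real N * Max ((\<lambda>i. norm (x - y i)) ` {1..n})"
proof -
  have grp: "group G" using assms(1) unfolding compact_group_def by blast
  define e where "e = Max ((\<lambda>i. norm (x - y i)) ` {1..n})"
  define R where "R = 2 * real n * real N * e"
  have ei: "norm (x - y i) \<le> e" if "i \<in> {1..n}" for i
    unfolding e_def using that by (intro Max_ge) auto
  have uni: "unitary_op (\<tau> g)" if "g \<in> carrier G" for g
    using assms(6) that unfolding unitary_rep_def by blast
  have kb: "norm (\<tau> k x - x) \<le> 2 * e" if "i \<in> {1..n}" "k \<in> Ks i" for i k
  proof -
    have kc: "k \<in> carrier G" using assms(3)[OF that(1)] that(2) subgroup.subset by blast
    have "\<tau> k x - x = \<tau> k (x - y i) + (y i - x)"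
      using unitary_diff[OF uni[OF kc]] assms(8)[OF that] by simp
    then have "norm (\<tau> k x - x) \<le> norm (\<tau> k (x - y i)) + norm (y i - x)"
      by (metis norm_triangle_ineq)
    also have "\<dots> = norm (x - y i) + norm (x - y i)"
      using unitary_norm[OF uni[OF kc]] by (simp add: norm_minus_commute)
    finally show ?thesis using ei[OF that(1)] by simp
  qed
  have orb: "norm (\<tau> g x - x) \<le> R" if "g \<in> carrier G" for g
  proof -
    have gm: "g \<in> prod_power_set G Ks n N" using that assms(5) by simp
    then obtain ks where ks: "g = foldr (\<lambda>a b. a \<otimes>\<^bsub>G\<^esub> b) ks \<one>\<^bsub>G\<^esub>" "length ks = n * N"
      "\<forall>j < n * N. ks ! j \<in> Ks (j mod n + 1)"
      unfolding prod_power_set_def by blast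
    have idx: "j mod n + 1 \<in> {1..n}" for j
    proof -
      have "j mod n < n" using assms(2) by simp
      then show ?thesis by simp
    qed
    have sc: "set ks \<subseteq> carrier G"
    proof
      fix k assume "k \<in> set ks"
      then obtain j where "j < n * N" "k = ks ! j" using ks(2) by (metis in_set_conv_nth)
      then show "k \<in> carrier G" using ks(3) assms(3)[OF idx] subgroup.subset by blast
    qed
    have sb: "\<forall>k\<in>set ks. norm (\<tau> k x - x) \<le> 2 * e"
    proof
      fix k assume "k \<in> set ks"
      then obtain j where "j < n * N" "k = ks ! j" using ks(2) by (metis in_set_conv_nth)
      then show "norm (\<tau> k x - x) \<le> 2 * e" using ks(3) kb[OF idx] by blast
    qed
    have "norm (\<tau> g x - x) \<le> real (length ks) * (2 * e)"
      using foldr_bound[OF grp assms(6) sc sb] ks(1) by simp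
    then show ?thesis unfolding R_def using ks(2) by (simp add: algebra_simps)
  qed
  define Orb where "Orb = (\<lambda>g. \<tau> g x) ` carrier G"
  define C where "C = closure (convex hull Orb)"
  have Ccl: "closed C" and Ccv: "convex C" unfolding C_def
    by (auto intro: convex_closure convex_convex_hull)
  have xO: "x \<in> Orb" unfolding Orb_def using assms(6) grp
    by (force simp: unitary_rep_def group.is_monoid monoid.one_closed)
  have Cne: "C \<noteq> {}" unfolding C_def using xO hull_subset closure_subset by fast
  have inv: "\<tau> g ` C \<subseteq> C" if g: "g \<in> carrier G" for g
  proof -
    have lin: "linear (\<tau> g)" using unitary_linear[OF uni[OF g]] .
    have cont: "continuous_on (closure (convex hull Orb)) (\<tau> g)"
      by (intro linear_continuous_on linear_conv_bounded_linear[THEN iffD1] lin)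
    have "\<tau> g ` Orb \<subseteq> Orb"
    proof
      fix v assume "v \<in> \<tau> g ` Orb"
      then obtain h where h: "h \<in> carrier G" "v = \<tau> g (\<tau> h x)" unfolding Orb_def by blast
      then have "v = \<tau> (g \<otimes>\<^bsub>G\<^esub> h) x" using assms(6) g unfolding unitary_rep_def by simp
      moreover have "g \<otimes>\<^bsub>G\<^esub> h \<in> carrier G" using grp g h by (simp add: group.is_monoid monoid.m_closed)
      ultimately show "v \<in> Orb" unfolding Orb_def by blast
    qed
    then have "\<tau> g ` (convex hull Orb) \<subseteq> convex hull Orb"
      unfolding convex_hull_linear_image[OF lin] by (rule hull_mono)
    then have "\<tau> g ` (convex hull Orb) \<subseteq> C" unfolding C_def using closure_subset by blast
    then show ?thesis unfolding C_def using image_closure_subset[OF cont closed_closure] C_def by simp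
  qed
  define c where "c = closest_point C 0"
  have cC: "c \<in> C" unfolding c_def using closest_point_in_set[OF Ccl Cne] .
  have cmin: "\<forall>z\<in>C. dist 0 c \<le> dist 0 z" unfolding c_def using closest_point_exists(2)[OF Ccl Cne] .
  have "\<forall>g\<in>carrier G. \<tau> g c = c"
  proof
    fix g assume g: "g \<in> carrier G"
    have "\<tau> g c \<in> C" using inv[OF g] cC by blast
    moreover have "dist 0 (\<tau> g c) = dist 0 c" using unitary_norm[OF uni[OF g]] by simp
    ultimately have "\<tau> g c = closest_point C 0"
      using cmin by (intro closest_point_unique[OF Ccv Ccl]) auto
    then show "\<tau> g c = c" unfolding c_def .
  qed
  then have "c = 0" using assms(7) by blast
  then have z: "0 \<in> C" using cC by simp
  have "Orb \<subseteq> cball x R" using orb unfolding Orb_def by (auto simp: dist_norm norm_minus_commute)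
  then have "convex hull Orb \<subseteq> cball x R" by (intro hull_minimal) auto
  then have "C \<subseteq> cball x R" unfolding C_def by (intro closure_minimal) auto
  then have "dist x 0 \<le> R" using z by auto
  then show ?thesis unfolding R_def e_def by simp
qed

end
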